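(* Let $\Bbbk$ be a unital ring and $n,r$ positive integers. Let $\Lambda$ be a set-partition of $\{1,\dots,r\}$ and $\Lambda'$ a set-partition of $\{1,\dots,r+1\}$, each with at most $n$ parts. Then (a) $\mathbf V(\Lambda)\cong H_n(\ell(\Lambda))$ as left $\Bbbk W_n$-modules; (b) $\mathbf V'(\Lambda')\cong H_{n-1}(\ell(\Lambda')-1)$ as left $\Bbbk W_{n-1}$-modules.
   Context: $\mathbf V$ is a free $\Bbbk$-module with basis $\mathbf v_1,\dots,\mathbf v_n$; $W_n$ (symmetric group on $\{1,\dots,n\}$) acts on tensor powers by $w(\mathbf v_{j_1}\otimes\cdots\otimes\mathbf v_{j_m})=\mathbf v_{w(j_1)}\otimes\cdots\otimes\mathbf v_{w(j_m)}$, and $W_{n-1}=\{w:w(n)=n\}$ is identified with the symmetric group on $\{1,\dots,n-1\}$. The value-type of $(i_1,\dots,i_m)$ is the set-partition of $\{1,\dots,m\}$ with parts the nonempty sets $\{\alpha:i_\alpha=j\}$; $\ell$ denotes number of parts. $\mathbf V(\Lambda)\subseteq\mathbf V^{\otimes r}$ is spanned by simple tensors $\mathbf v_{i_1}\otimes\cdots\otimes\mathbf v_{i_r}$ of value-type $\Lambda$; $\mathbf V'(\Lambda')$ is spanned by $\mathbf v_{i_1}\otimes\cdots\otimes\mathbf v_{i_r}\otimes\mathbf v_n$ with $(i_1,\dots,i_r,n)$ of value-type $\Lambda'$. For $1\le l\le m$, $H_m(l)$ is the $\Bbbk W_m$-submodule of $\mathbf V_m^{\otimes l}$ (where $\mathbf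 V_m$ is free with basis $\mathbf v_1,\dots,\mathbf v_m$) generated by $\mathbf v_{m-l+1}\otimes\cdots\otimes\mathbf v_m$; $H_m(0)=\mathbf V_m^{\otimes 0}=\Bbbk$ with trivial action. *)

theory Defs
  imports Main "HOL-Library.Disjoint_Sets" "HOL-Combinatorics.Permutations"
begin

text \<open>Elements of the tensor power V^{\<otimes>m} (V free on v_1..v_n) are represented by their
  coefficient functions on index words: a function f :: nat list \<Rightarrow> 'k which vanishes
  outside words of length m with letters in {1..n}.\<close>

definition tens :: "nat \<Rightarrow> nat \<Rightarrow> (nat list \<Rightarrow> 'k::ring_1) set" where
  "tens n m = {f. \<forall>xs. f xs \<noteq> 0 \<longrightarrow> length xs = m \<and> set xs \<subseteq> {1..n}}"

definition madd :: "(nat list \<Rightarrow> 'k::ring_1) \<Rightarrow> (nat list \<Rightarrow> 'k) \<Rightarrow> nat list \<Rightarrow> 'k" where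
  "madd f g = (\<lambda>xs. f xs + g xs)"

definition msmult :: "'k::ring_1 \<Rightarrow> (nat list \<Rightarrow> 'k) \<Rightarrow> nat list \<Rightarrow> 'k" where
  "msmult c f = (\<lambda>xs. c * f xs)"

definition mzero :: "nat list \<Rightarrow> 'k::ring_1" where
  "mzero = (\<lambda>xs. 0)"

text \<open>Action of a permutation w: w(v_{j_1}\<otimes>...\<otimes>v_{j_m}) = v_{w j_1}\<otimes>...\<otimes>v_{w j_m}.\<close>
definition pact :: "(nat \<Rightarrow> nat) \<Rightarrow> (nat list \<Rightarrow> 'k::ring_1) \<Rightarrow> nat list \<Rightarrow> 'k" where
  "pact w f = (\<lambda>xs. f (map (inv w) xs))"

definition simple_tensor :: "nat list \<Rightarrow> nat list \<Rightarrow> 'k::ring_1" where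
  "simple_tensor ys = (\<lambda>xs. if xs = ys then 1 else 0)"

definition Wgrp :: "nat \<Rightarrow> (nat \<Rightarrow> nat) set" where
  "Wgrp n = {w. w permutes {1..n}}"

definition valtype :: "nat list \<Rightarrow> nat set set" where
  "valtype xs = {{a \<in> {1..length xs}. xs ! (a - 1) = j} | j. j \<in> set xs}"

definition Vsub :: "nat \<Rightarrow> nat \<Rightarrow> nat set set \<Rightarrow> (nat list \<Rightarrow> 'k::ring_1) set" where
  "Vsub n r \<Lambda> = {f. \<forall>xs. f xs \<noteq> 0 \<longrightarrow>
      length xs = r \<and> set xs \<subseteq> {1..n} \<and> valtype xs = \<Lambda>}"

definition Vsub' :: "nat \<Rightarrow> nat \<Rightarrow> nat set set \<Rightarrow> (nat list \<Rightarrow> 'k::ring_1) set" where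
  "Vsub' n r \<Lambda>' = {f. \<forall>xs. f xs \<noteq> 0 \<longrightarrow>
      length xs = Suc r \<and> set xs \<subseteq> {1..n} \<and> last xs = n \<and> valtype xs = \<Lambda>'}"

text \<open>H_m(l): the kW_m-submodule of V_m^{\<otimes>l} generated by v_{m-l+1}\<otimes>...\<otimes>v_m
  (for l = 0 the generator is the empty tensor 1 \<in> k = V_m^{\<otimes>0}, giving H_m(0) = k
  with trivial action).\<close>
inductive_set Hmod :: "nat \<Rightarrow> nat \<Rightarrow> (nat list \<Rightarrow> 'k::ring_1) set" for m l where
  gen: "simple_tensor [Suc (m - l)..<Suc m] \<in> Hmod m l"
| zero: "mzero \<in> Hmod m l"
| add: "f \<in> Hmod m l \<Longrightarrow> g \<in> Hmod m l \<Longrightarrow> madd f g \<in> Hmod m l"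
| smult: "f \<in> Hmod m l \<Longrightarrow> msmult c f \<in> Hmod m l"
| act: "f \<in> Hmod m l \<Longrightarrow> w \<in> Wgrp m \<Longrightarrow> pact w f \<in> Hmod m l"

definition kW_iso :: "(nat \<Rightarrow> nat) set \<Rightarrow> (nat list \<Rightarrow> 'k::ring_1) set \<Rightarrow> (nat list \<Rightarrow> 'k) set \<Rightarrow> bool" where
  "kW_iso W A B \<longleftrightarrow> (\<exists>\<phi>. bij_betw \<phi> A B
      \<and> (\<forall>f\<in>A. \<forall>g\<in>A. \<phi> (madd f g) = madd (\<phi> f) (\<phi> g))
      \<and> (\<forall>c. \<forall>f\<in>A. \<phi> (msmult c f) = msmult c (\<phi> f))
      \<and> (\<forall>w\<in>W. \<forall>f\<in>A. \<phi> (pact w f) = pact w (\<phi> f)))"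

end

theory Submission
  imports Defs
begin



definition supp_in :: "nat list set \<Rightarrow> (nat list \<Rightarrow> 'k::ring_1) set" where
  "supp_in S = {f. \<forall>xs. f xs \<noteq> 0 \<longrightarrow> xs \<in> S}"

lemma abstract_iso:
  assumes inj: "inj_on \<gamma> T" and img: "\<gamma> ` T = S"
    and clos: "\<And>w ys. w \<in> W \<Longrightarrow> (map (inv w) ys \<in> T) = (ys \<in> T)"
    and eqv: "\<And>w ys. w \<in> W \<Longrightarrow> ys \<in> T \<Longrightarrow> \<gamma> (map (inv w) ys) = map (inv w) (\<gamma> ys)"
  shows "kW_iso W (supp_in S :: (nat list \<Rightarrow> 'k::ring_1) set) (supp_in T)"
proof -
  define \<phi> :: "(nat list \<Rightarrow> 'k) \<Rightarrow> nat list \<Rightarrow> 'k" where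
    "\<phi> f = (\<lambda>ys. if ys \<in> T then f (\<gamma> ys) else 0)" for f
  have into: "\<phi> ` supp_in S \<subseteq> supp_in T"
    by (auto simp: \<phi>_def supp_in_def split: if_splits)
  have injphi: "inj_on \<phi> (supp_in S)"
  proof (rule inj_onI)
    fix f g assume f: "f \<in> supp_in S" and g: "g \<in> supp_in S" and e: "\<phi> f = \<phi> g"
    show "f = g"
    proof
      fix xs show "f xs = g xs"
      proof (cases "xs \<in> S")
        case True
        then obtain ys where ys: "ys \<in> T" "xs = \<gamma> ys" using img by auto
        have "\<phi> f ys = \<phi> g ys" using e by simp
        then show ?thesis using ys by (simp add: \<phi>_def)
      next
        case False
        have "f xs = 0" using f False unfolding supp_in_def by blast
        moreover have "g xs = 0" using g False unfolding supp_in_def by blast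
        ultimately show ?thesis by simp
      qed
    qed
  qed
  have onto: "supp_in T \<subseteq> \<phi> ` supp_in S"
  proof
    fix g :: "nat list \<Rightarrow> 'k" assume g: "g \<in> supp_in T"
    define f where "f = (\<lambda>xs. if xs \<in> S then g (inv_into T \<gamma> xs) else 0)"
    have "f \<in> supp_in S" by (auto simp: f_def supp_in_def)
    moreover have "\<phi> f = g"
    proof
      fix ys show "\<phi> f ys = g ys"
        using g img inj by (auto simp: \<phi>_def f_def supp_in_def)
    qed
    ultimately show "g \<in> \<phi> ` supp_in S" by blast
  qed
  have "bij_betw \<phi> (supp_in S) (supp_in T)"
    using into injphi onto by (auto simp: bij_betw_def)
  moreover have "\<forall>f\<in>supp_in S. \<forall>g\<in>supp_in S. \<phi> (madd f g) = madd (\<phi> f) (\<phi> g)"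
    by (auto simp: \<phi>_def madd_def)
  moreover have "\<forall>c. \<forall>f\<in>supp_in S. \<phi> (msmult c f) = msmult c (\<phi> f)"
    by (auto simp: \<phi>_def msmult_def)
  moreover have "\<forall>w\<in>W. \<forall>f\<in>supp_in S. \<phi> (pact w f) = pact w (\<phi> f)"
    by (auto simp: \<phi>_def pact_def clos eqv)
  ultimately show ?thesis unfolding kW_iso_def by blast
qed



definition Inj :: "nat \<Rightarrow> nat \<Rightarrow> nat list set" where
  "Inj m l = {ys. length ys = l \<and> distinct ys \<and> set ys \<subseteq> {1..m}}"

lemma Inj_map_perm:
  assumes "u permutes {1..m}" "ys \<in> Inj m l"
  shows "map u ys \<in> Inj m l"
proof -
  have "u ` {1..m} = {1..m}" using assms(1) by (rule permutes_image)
  moreover have "set ys \<subseteq> {1..m}" "length ys = l" "distinct ys" using assms(2) by (auto simp: Inj_def)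
  moreover have "inj_on u (set ys)" using permutes_inj[OF assms(1)] by (rule inj_on_subset) simp
  ultimately show ?thesis
    unfolding Inj_def by (auto simp: distinct_map)
qed

lemma Inj_clos:
  assumes "w \<in> Wgrp m"
  shows "(map (inv w) ys \<in> Inj m l) = (ys \<in> Inj m l)"
proof
  have w: "w permutes {1..m}" and iw: "inv w permutes {1..m}"
    using assms permutes_inv by (auto simp: Wgrp_def)
  assume "map (inv w) ys \<in> Inj m l"
  from Inj_map_perm[OF w this] show "ys \<in> Inj m l"
    using permutes_inverses(1)[OF w] by (simp add: comp_def)
next
  have iw: "inv w permutes {1..m}"
    using assms permutes_inv by (auto simp: Wgrp_def)
  assume "ys \<in> Inj m l" then show "map (inv w) ys \<in> Inj m l" by (rule Inj_map_perm[OF iw])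
qed



lemma Hmod_sub:
  assumes "l \<le> m"
  shows "f \<in> Hmod m l \<Longrightarrow> f \<in> supp_in (Inj m l)"
proof (induction rule: Hmod.induct)
  case gen
  then show ?case using assms by (auto simp: supp_in_def simple_tensor_def Inj_def)
next
  case zero
  then show ?case by (auto simp: supp_in_def mzero_def)
next
  case (add f g)
  then show ?case unfolding supp_in_def madd_def
    by (smt (verit) add_0 mem_Collect_eq)
next
  case (smult f c)
  then show ?case unfolding supp_in_def msmult_def
    by (smt (verit) mult_zero_right mem_Collect_eq)
next
  case (act f w)
  show ?case unfolding supp_in_def pact_def
  proof (intro CollectI allI impI)
    fix xs assume "f (map (inv w) xs) \<noteq> 0"
    then have "map (inv w) xs \<in> Inj m l" using act.IH by (auto simp: supp_in_def)
    then show "xs \<in> Inj m l" using Inj_clos[OF act.hyps(2)] by simp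
  qed
qed




lemma exists_perm:
  assumes g: "g \<in> Inj m l" and y: "ys \<in> Inj m l"
  shows "\<exists>w. w permutes {1..m} \<and> map w g = ys"
proof -
  have dg: "distinct g" "length g = l" "set g \<subseteq> {1..m}" using g by (auto simp: Inj_def)
  have dy: "distinct ys" "length ys = l" "set ys \<subseteq> {1..m}" using y by (auto simp: Inj_def)
  have b1: "bij_betw ((!) g) {..<l} (set g)" using dg by (auto intro: bij_betw_nth)
  have b2: "bij_betw ((!) ys) {..<l} (set ys)" using dy by (auto intro: bij_betw_nth)
  define h1 where "h1 = (\<lambda>x. ys ! inv_into {..<l} ((!) g) x)"
  have bh1: "bij_betw h1 (set g) (set ys)"
    unfolding h1_def using bij_betw_trans[OF bij_betw_inv_into[OF b1] b2] by (simp add: comp_def)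
  have cg: "card ({1..m} - set g) = card ({1..m} - set ys)"
    using dg dy by (simp add: card_Diff_subset distinct_card)
  obtain h2 where bh2: "bij_betw h2 ({1..m} - set g) ({1..m} - set ys)"
    using finite_same_card_bij[OF _ _ cg] by auto
  define w where "w = (\<lambda>x. if x \<in> set g then h1 x else if x \<in> {1..m} then h2 x else x)"
  have b2': "bij_betw (\<lambda>x. if x \<in> {1..m} then h2 x else x) ({1..m} - set g) ({1..m} - set ys)"
  proof -
    have "bij_betw h2 ({1..m} - set g) ({1..m} - set ys) = bij_betw (\<lambda>x. if x \<in> {1..m} then h2 x else x) ({1..m} - set g) ({1..m} - set ys)"
      by (rule bij_betw_cong) simp
    then show ?thesis using bh2 by simp
  qed
  have "bij_betw w (set g \<union> ({1..m} - set g)) (set ys \<union> ({1..m} - set ys))"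
    unfolding w_def by (rule bij_betw_disjoint_Un[OF bh1 b2']) auto
  then have "bij_betw w {1..m} {1..m}" using dg dy by (simp add: Un_absorb1 Un_Diff_cancel)
  then have wp: "w permutes {1..m}"
    by (rule bij_imp_permutes) (auto simp: w_def dest: subsetD[OF dg(3)])
  have "map w g = ys"
  proof (rule nth_equalityI)
    show "length (map w g) = length ys" using dg dy by simp
    fix i assume "i < length (map w g)"
    then have i: "i < l" using dg by simp
    have "inv_into {..<l} ((!) g) (g ! i) = i"
      using b1 i by (simp add: bij_betw_def inv_into_f_f)
    then show "map w g ! i = ys ! i" using i dg by (simp add: w_def h1_def)
  qed
  then show ?thesis using wp by blast
qed

lemma Hmod_sup:
  assumes "l \<le> m"
  shows "f \<in> supp_in (Inj m l) \<Longrightarrow> (f :: nat list \<Rightarrow> 'k::ring_1) \<in> Hmod m l"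
proof -
  define g0 where "g0 = [Suc (m - l)..<Suc m]"
  have g0: "g0 \<in> Inj m l" using assms by (auto simp: Inj_def g0_def)
  have st: "(simple_tensor ys :: nat list \<Rightarrow> 'k) \<in> Hmod m l" if ysI: "ys \<in> Inj m l" for ys
  proof -
    obtain w where w: "w permutes {1..m}" "map w g0 = ys" using exists_perm[OF g0 ysI] by blast
    have "pact w (simple_tensor g0) = (simple_tensor ys :: nat list \<Rightarrow> 'k)"
    proof
      fix xs
      have "(map (inv w) xs = g0) = (xs = map w g0)"
        using permutes_inverses[OF w(1)] by (auto simp: comp_def map_idI)
      then show "pact w (simple_tensor g0) xs = (simple_tensor ys :: nat list \<Rightarrow> 'k) xs"
        using w by (simp add: pact_def simple_tensor_def)
    qed
    moreover have "pact w (simple_tensor g0) \<in> (Hmod m l :: (nat list \<Rightarrow> 'k) set)"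
    proof (rule Hmod.act)
      show "simple_tensor g0 \<in> (Hmod m l :: (nat list \<Rightarrow> 'k) set)" unfolding g0_def by (rule Hmod.gen)
      show "w \<in> Wgrp m" using w by (simp add: Wgrp_def)
    qed
    ultimately show ?thesis by metis
  qed
  have fin: "finite (Inj m l)"
  proof (rule finite_subset)
    show "Inj m l \<subseteq> {ys. set ys \<subseteq> {1..m} \<and> length ys = l}" by (auto simp: Inj_def)
    show "finite {ys. set ys \<subseteq> {1..m} \<and> length ys = l}" by (rule finite_lists_length_eq) simp
  qed
  have "\<forall>f. (\<forall>xs. (f :: nat list \<Rightarrow> 'k) xs \<noteq> 0 \<longrightarrow> xs \<in> F \<and> xs \<in> Inj m l) \<longrightarrow> f \<in> Hmod m l"
    if "finite F" for F
    using that
  proof (induction F rule: finite_induct)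
    case empty
    show ?case
    proof (intro allI impI)
      fix f :: "nat list \<Rightarrow> 'k" assume "\<forall>xs. f xs \<noteq> 0 \<longrightarrow> xs \<in> {} \<and> xs \<in> Inj m l"
      then have "f = mzero" by (auto simp: mzero_def)
      then show "f \<in> Hmod m l" by (simp add: Hmod.zero)
    qed
  next
    case (insert y F)
    show ?case
    proof (intro allI impI)
      fix f :: "nat list \<Rightarrow> 'k" assume f: "\<forall>xs. f xs \<noteq> 0 \<longrightarrow> xs \<in> insert y F \<and> xs \<in> Inj m l"
      have e: "f = madd (msmult (f y) (simple_tensor y)) (f(y := 0))"
        by (auto simp: madd_def msmult_def simple_tensor_def)
      have "\<forall>xs. (f(y := 0)) xs \<noteq> 0 \<longrightarrow> xs \<in> F \<and> xs \<in> Inj m l" using f by auto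
      then have h2: "f(y := 0) \<in> Hmod m l" using insert.IH by blast
      show "f \<in> Hmod m l"
      proof (cases "f y = 0")
        case True then show ?thesis using h2 by (metis fun_upd_idem)
      next
        case False
        then have "y \<in> Inj m l" using f by auto
        then show ?thesis using h2 e st by (metis Hmod.add Hmod.smult)
      qed
    qed
  qed
  then show "f \<in> supp_in (Inj m l) \<Longrightarrow> f \<in> Hmod m l" using fin by (auto simp: supp_in_def)
qed

lemma Hmod_eq: "l \<le> m \<Longrightarrow> Hmod m l = supp_in (Inj m l)"
  using Hmod_sub Hmod_sup by blast




definition Sset :: "nat \<Rightarrow> nat \<Rightarrow> nat set set \<Rightarrow> nat list set" where
  "Sset n r \<Lambda> = {xs. length xs = r \<and> set xs \<subseteq> {1..n} \<and> valtype xs = \<Lambda>}"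

locale enum =
  fixes r l :: nat and \<Lambda> :: "nat set set" and P :: "nat \<Rightarrow> nat set"
  assumes part: "partition_on {1..r} \<Lambda>" and bP: "bij_betw P {0..<l} \<Lambda>"
begin

definition gidx :: "nat \<Rightarrow> nat" where "gidx a = (THE i. i < l \<and> a \<in> P i)"
definition gam :: "nat list \<Rightarrow> nat list" where "gam ys = map (\<lambda>a. ys ! gidx a) [1..<Suc r]"

lemma P_in: "i < l \<Longrightarrow> P i \<in> \<Lambda>" using bP by (auto simp: bij_betw_def)
lemma P_sub: "i < l \<Longrightarrow> P i \<subseteq> {1..r}" using P_in partition_onD1[OF part] by blast
lemma P_ne: "i < l \<Longrightarrow> P i \<noteq> {}" using P_in partition_onD3[OF part] by metis

lemma uniq: assumes "i < l" "j < l" "a \<in> P i" "a \<in> P j" shows "i = j"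
proof -
  have "P i = P j"
  proof (rule ccontr)
    assume "P i \<noteq> P j"
    then have "P i \<inter> P j = {}" using partition_onD2[OF part] P_in[OF assms(1)] P_in[OF assms(2)]
      unfolding disjoint_def by blast
    then show False using assms(3,4) by blast
  qed
  then show ?thesis using bP assms(1,2) by (auto simp: bij_betw_def inj_on_def)
qed

lemma G1: assumes "a \<in> {1..r}" shows "gidx a < l \<and> a \<in> P (gidx a)"
proof -
  obtain B where B: "B \<in> \<Lambda>" "a \<in> B" using assms partition_onD1[OF part] by blast
  obtain i where i: "i < l" "B = P i" using B bP by (auto simp: bij_betw_def)
  have "gidx a = i" unfolding gidx_def
    by (rule the_equality) (use i B uniq in auto)
  then show ?thesis using i B by simp
qed

lemma G2: assumes "i < l" "a \<in> P i" shows "gidx a = i"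
  unfolding gidx_def by (rule the_equality) (use assms uniq in auto)

lemma gam_nth: "a \<in> {1..r} \<Longrightarrow> gam ys ! (a - 1) = ys ! gidx a"
  by (auto simp: gam_def nth_map simp del: upt_Suc)

lemma gam_map: "length ys = l \<Longrightarrow> gam (map u ys) = map u (gam ys)"
  unfolding gam_def using G1 by auto

lemma gidx_img: "gidx ` {1..r} = {0..<l}"
proof
  show "gidx ` {1..r} \<subseteq> {0..<l}" using G1 by auto
  show "{0..<l} \<subseteq> gidx ` {1..r}"
  proof
    fix i assume i: "i \<in> {0..<l}"
    then obtain a where "a \<in> P i" using P_ne by auto
    then show "i \<in> gidx ` {1..r}" using G2 P_sub i by force
  qed
qed

end


context enum begin
lemma gam_in: assumes "ys \<in> Inj n l" shows "gam ys \<in> Sset n r \<Lambda>"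
proof -
  have ys: "length ys = l" "distinct ys" "set ys \<subseteq> {1..n}" using assms by (auto simp: Inj_def)
  have len: "length (gam ys) = r" by (simp add: gam_def del: upt_Suc)
  have st: "set (gam ys) = (\<lambda>a. ys ! gidx a) ` {1..r}"
    by (simp add: gam_def atLeastLessThanSuc_atLeastAtMost del: upt_Suc)
  have "set (gam ys) \<subseteq> {1..n}"
  proof
    fix y assume "y \<in> set (gam ys)"
    then obtain a where a: "a \<in> {1..r}" "y = ys ! gidx a" using st by blast
    have "gidx a < length ys" using G1[OF a(1)] ys by simp
    then have "y \<in> set ys" using a by simp
    then show "y \<in> {1..n}" using ys by blast
  qed
  moreover have "valtype (gam ys) = \<Lambda>"
  proof -
    have fib: "{a \<in> {1..r}. gam ys ! (a - 1) = ys ! gidx b} = P (gidx b)" if b: "b \<in> {1..r}" for b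
    proof -
      have "(gam ys ! (a - 1) = ys ! gidx b) = (gidx a = gidx b)" if a: "a \<in> {1..r}" for a
      proof -
        have "gidx a < length ys" "gidx b < length ys" using G1[OF a] G1[OF b] ys(1) by simp_all
        then show ?thesis using gam_nth[OF a] ys(2) by (simp add: nth_eq_iff_index_eq)
      qed
      then have "{a \<in> {1..r}. gam ys ! (a - 1) = ys ! gidx b} = {a \<in> {1..r}. gidx a = gidx b}"
        by blast
      also have "\<dots> = P (gidx b)"
      proof (intro equalityI subsetI)
        fix a assume "a \<in> {a \<in> {1..r}. gidx a = gidx b}"
        then have "a \<in> {1..r}" "gidx a = gidx b" by auto
        then show "a \<in> P (gidx b)" using G1 by metis
      next
        fix a assume a: "a \<in> P (gidx b)"
        have gb: "gidx b < l" using G1[OF b] by simp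
        have "a \<in> {1..r}" using P_sub[OF gb] a by blast
        moreover have "gidx a = gidx b" using G2[OF gb a] .
        ultimately show "a \<in> {a \<in> {1..r}. gidx a = gidx b}" by simp
      qed
      finally show ?thesis .
    qed
    have "valtype (gam ys) = {{a \<in> {1..r}. gam ys ! (a - 1) = j} | j. j \<in> set (gam ys)}"
      by (simp add: valtype_def len)
    also have "\<dots> = (\<lambda>j. {a \<in> {1..r}. gam ys ! (a - 1) = j}) ` ((\<lambda>a. ys ! gidx a) ` {1..r})"
      unfolding st by (rule Setcompr_eq_image)
    also have "\<dots> = (\<lambda>b. P (gidx b)) ` {1..r}"
      unfolding image_image by (rule image_cong) (use fib in blast)+
    also have "\<dots> = P ` {0..<l}" using gidx_img by (metis image_image)
    also have "\<dots> = \<Lambda>" using bP by (simp add: bij_betw_def)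
    finally show ?thesis .
  qed
  ultimately show ?thesis using len by (simp add: Sset_def)
qed

end


context enum begin
lemma gam_inj: "inj_on gam {ys. length ys = l}"
proof (rule inj_onI)
  fix ys zs assume ys: "ys \<in> {ys. length ys = l}" and zs: "zs \<in> {ys. length ys = l}" and e: "gam ys = gam zs"
  show "ys = zs"
  proof (rule nth_equalityI)
    show "length ys = length zs" using ys zs by simp
    fix i assume "i < length ys"
    then have i: "i < l" using ys by simp
    obtain a where a: "a \<in> P i" using P_ne[OF i] by auto
    have a1: "a \<in> {1..r}" using P_sub[OF i] a by auto
    have "gam ys ! (a - 1) = gam zs ! (a - 1)" using e by simp
    then show "ys ! i = zs ! i" using gam_nth[OF a1] G2[OF i a] by simp
  qed
qed

lemma valtype_same:
  assumes xs: "xs \<in> Sset n r \<Lambda>" and a: "a \<in> {1..r}" and b: "b \<in> {1..r}"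
  shows "(xs ! (a - 1) = xs ! (b - 1)) = (gidx a = gidx b)"
proof -
  have lx: "length xs = r" and vx: "valtype xs = \<Lambda>" using xs by (auto simp: Sset_def)
  define F where "F = {c \<in> {1..r}. xs ! (c - 1) = xs ! (a - 1)}"
  have "xs ! (a - 1) \<in> set xs" using a lx by auto
  then have "F \<in> \<Lambda>" unfolding F_def using vx[symmetric] lx by (auto simp: valtype_def)
  then obtain i where i: "i < l" "F = P i" using bP by (auto simp: bij_betw_def)
  have aF: "a \<in> F" using a by (simp add: F_def)
  have ga: "gidx a = i" using G2 i aF by simp
  show ?thesis
  proof
    assume "xs ! (a - 1) = xs ! (b - 1)"
    then have "b \<in> F" using b by (simp add: F_def)
    then show "gidx a = gidx b" using G2 i ga by simp
  next
    assume "gidx a = gidx b"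
    then have "b \<in> P i" using G1[OF b] ga by simp
    then have "b \<in> F" using i by simp
    then show "xs ! (a - 1) = xs ! (b - 1)" by (simp add: F_def)
  qed
qed

lemma gam_surj: assumes xs: "xs \<in> Sset n r \<Lambda>" shows "\<exists>ys\<in>Inj n l. gam ys = xs"
proof -
  have lx: "length xs = r" and sx: "set xs \<subseteq> {1..n}" using xs by (auto simp: Sset_def)
  define rep where "rep i = (SOME a. a \<in> P i)" for i
  have rep: "rep i \<in> P i" if "i < l" for i using P_ne[OF that] unfolding rep_def by (auto intro: someI)
  have rep1: "rep i \<in> {1..r}" if "i < l" for i using rep[OF that] P_sub[OF that] by auto
  define ys where "ys = map (\<lambda>i. xs ! (rep i - 1)) [0..<l]"
  have "distinct ys"
    unfolding ys_def distinct_conv_nth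
  proof (intro allI impI)
    fix i j assume "i < length (map (\<lambda>i. xs ! (rep i - 1)) [0..<l])" "j < length (map (\<lambda>i. xs ! (rep i - 1)) [0..<l])" "i \<noteq> j"
    then have i: "i < l" "j < l" "i \<noteq> j" by auto
    have "gidx (rep i) \<noteq> gidx (rep j)" using G2 rep i by metis
    then show "map (\<lambda>i. xs ! (rep i - 1)) [0..<l] ! i \<noteq> map (\<lambda>i. xs ! (rep i - 1)) [0..<l] ! j"
      using valtype_same[OF xs rep1 rep1] i by simp
  qed
  moreover have "set ys \<subseteq> {1..n}"
  proof
    fix y assume "y \<in> set ys"
    then obtain i where i: "i < l" "y = xs ! (rep i - 1)" by (auto simp: ys_def)
    have "rep i - 1 < length xs" using rep1[OF i(1)] lx by auto
    then show "y \<in> {1..n}" using sx i by (auto dest: nth_mem)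
  qed
  moreover have "gam ys = xs"
  proof (rule nth_equalityI)
    show "length (gam ys) = length xs" using lx by (simp add: gam_def del: upt_Suc)
    fix k assume "k < length (gam ys)"
    then have k: "Suc k \<in> {1..r}" by (simp add: gam_def del: upt_Suc)
    have gk: "gidx (Suc k) < l" using G1[OF k] by simp
    have "gam ys ! k = ys ! gidx (Suc k)" using gam_nth[OF k] by simp
    also have "\<dots> = xs ! (rep (gidx (Suc k)) - 1)" using gk by (simp add: ys_def)
    also have "\<dots> = xs ! (Suc k - 1)"
      using valtype_same[OF xs rep1[OF gk] k] G2[OF gk rep[OF gk]] by simp
    finally show "gam ys ! k = xs ! k" by simp
  qed
  moreover have "length ys = l" by (simp add: ys_def)
  ultimately have "ys \<in> Inj n l" "gam ys = xs" by (auto simp: Inj_def)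
  then show ?thesis by blast
qed

lemma gam_image: "gam ` Inj n l = Sset n r \<Lambda>"
  using gam_in gam_surj by blast

end




lemma partition_finite: "partition_on {1..(r::nat)} \<Lambda> \<Longrightarrow> finite \<Lambda>"
  by (rule finite_UnionD) (simp add: partition_onD1[symmetric])

lemma part_a:
  fixes n r :: nat and \<Lambda> :: "nat set set"
  assumes part: "partition_on {1..r} \<Lambda>" and cn: "card \<Lambda> \<le> n"
  shows "kW_iso (Wgrp n) (Vsub n r \<Lambda> :: (nat list \<Rightarrow> 'k::ring_1) set) (Hmod n (card \<Lambda>))"
proof -
  obtain P where bP: "bij_betw P {0..<card \<Lambda>} \<Lambda>"
    using ex_bij_betw_nat_finite[OF partition_finite[OF part]] by blast
  interpret enum r "card \<Lambda>" \<Lambda> P using part bP by unfold_locales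
  have V: "Vsub n r \<Lambda> = (supp_in (Sset n r \<Lambda>) :: (nat list \<Rightarrow> 'k) set)"
    by (auto simp: Vsub_def supp_in_def Sset_def)
  have H: "Hmod n (card \<Lambda>) = (supp_in (Inj n (card \<Lambda>)) :: (nat list \<Rightarrow> 'k) set)"
    using Hmod_eq[OF cn] .
  have "kW_iso (Wgrp n) (supp_in (Sset n r \<Lambda>) :: (nat list \<Rightarrow> 'k) set) (supp_in (Inj n (card \<Lambda>)))"
  proof (rule abstract_iso)
    show "inj_on gam (Inj n (card \<Lambda>))" by (rule inj_on_subset[OF gam_inj]) (auto simp: Inj_def)
    show "gam ` Inj n (card \<Lambda>) = Sset n r \<Lambda>" by (rule gam_image)
    show "(map (inv w) ys \<in> Inj n (card \<Lambda>)) = (ys \<in> Inj n (card \<Lambda>))" if "w \<in> Wgrp n" for w ys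
      using Inj_clos[OF that] .
    show "gam (map (inv w) ys) = map (inv w) (gam ys)" if "ys \<in> Inj n (card \<Lambda>)" for w ys
      using that by (intro gam_map) (simp add: Inj_def)
  qed
  then show ?thesis using V H by simp
qed

lemma part_b:
  fixes n r :: nat and \<Lambda> :: "nat set set"
  assumes n0: "0 < n" and part: "partition_on {1..Suc r} \<Lambda>" and cn: "card \<Lambda> \<le> n"
  shows "kW_iso (Wgrp (n - 1)) (Vsub' n r \<Lambda> :: (nat list \<Rightarrow> 'k::ring_1) set) (Hmod (n - 1) (card \<Lambda> - 1))"
proof -
  define l where "l = card \<Lambda>"
  have fin: "finite \<Lambda>" using partition_finite[OF part] .
  have "Suc r \<in> \<Union>\<Lambda>" using partition_onD1[OF part] by auto
  then obtain Q where Q: "Q \<in> \<Lambda>" "Suc r \<in> Q" by blast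
  have l1: "1 \<le> l" using Q fin by (simp add: l_def Suc_le_eq card_gt_0_iff) blast
  obtain P0 where bP0: "bij_betw P0 {0..<card (\<Lambda> - {Q})} (\<Lambda> - {Q})"
    using ex_bij_betw_nat_finite[of "\<Lambda> - {Q}"] fin by blast
  have cQ: "card (\<Lambda> - {Q}) = l - 1" using Q fin by (simp add: l_def)
  define P where "P = P0(l - 1 := Q)"
  have "bij_betw P {0..<l - 1} (\<Lambda> - {Q})"
  proof -
    have "bij_betw P0 {0..<l - 1} (\<Lambda> - {Q}) = bij_betw P {0..<l - 1} (\<Lambda> - {Q})"
      by (rule bij_betw_cong) (simp add: P_def)
    then show ?thesis using bP0 cQ by simp
  qed
  then have "bij_betw P ({0..<l - 1} \<union> {l - 1}) ((\<Lambda> - {Q}) \<union> {P (l - 1)})"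
    by (subst notIn_Un_bij_betw3[symmetric]) (auto simp: P_def)
  moreover have "{0..<l - 1} \<union> {l - 1} = {0..<l}" using l1 by auto
  moreover have "(\<Lambda> - {Q}) \<union> {P (l - 1)} = \<Lambda>" using Q by (auto simp: P_def)
  ultimately have bP: "bij_betw P {0..<l} \<Lambda>" by simp
  interpret enum "Suc r" l \<Lambda> P using part bP by unfold_locales
  have PQ: "P (l - 1) = Q" by (simp add: P_def)
  have gr: "gidx (Suc r) = l - 1" using G2[of "l - 1" "Suc r"] l1 PQ Q by simp
  define T where "T = Inj (n - 1) (l - 1)"
  define S where "S = {xs \<in> Sset n (Suc r) \<Lambda>. last xs = n}"
  define \<gamma> where "\<gamma> ys = gam (ys @ [n])" for ys
  have V: "Vsub' n r \<Lambda> = (supp_in S :: (nat list \<Rightarrow> 'k) set)"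
    by (auto simp: Vsub'_def supp_in_def Sset_def S_def)
  have H: "Hmod (n - 1) (card \<Lambda> - 1) = (supp_in T :: (nat list \<Rightarrow> 'k) set)"
    unfolding T_def l_def using cn by (intro Hmod_eq) simp
  have app: "ys @ [n] \<in> Inj n l" if "ys \<in> T" for ys
  proof -
    have "length ys = l - 1" "distinct ys" "set ys \<subseteq> {1..n - 1}" using that by (auto simp: T_def Inj_def)
    moreover then have "n \<notin> set ys" using n0 by auto
    moreover have "set ys \<subseteq> {1..n}"
    proof
      fix x assume "x \<in> set ys"
      then have "x \<in> {1..n - 1}" using \<open>set ys \<subseteq> {1..n - 1}\<close> by blast
      then show "x \<in> {1..n}" by auto
    qed
    ultimately show ?thesis using l1 n0 by (simp add: Inj_def)
  qed
  have lastgam: "last (gam zs) = zs ! (l - 1)" for zs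
  proof -
    have "length (gam zs) = Suc r" by (simp add: gam_def del: upt_Suc)
    then have "gam zs \<noteq> []" by auto
    then have "last (gam zs) = gam zs ! (length (gam zs) - 1)" by (rule last_conv_nth)
    then have "last (gam zs) = gam zs ! (Suc r - 1)" using \<open>length (gam zs) = Suc r\<close> by simp
    also have "\<dots> = zs ! (l - 1)" using gam_nth[of "Suc r" zs] gr by simp
    finally show ?thesis .
  qed
  have "kW_iso (Wgrp (n - 1)) (supp_in S :: (nat list \<Rightarrow> 'k) set) (supp_in T)"
  proof (rule abstract_iso)
    show "inj_on \<gamma> T"
    proof (rule inj_onI)
      fix ys zs assume "ys \<in> T" "zs \<in> T" "\<gamma> ys = \<gamma> zs"
      then have "ys @ [n] = zs @ [n]" using gam_inj app unfolding \<gamma>_def inj_on_def Inj_def by blast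
      then show "ys = zs" by simp
    qed
    show "\<gamma> ` T = S"
    proof (intro equalityI subsetI)
      fix xs assume "xs \<in> \<gamma> ` T"
      then obtain ys where ys: "ys \<in> T" "xs = gam (ys @ [n])" by (auto simp: \<gamma>_def)
      have "length ys = l - 1" using ys by (simp add: T_def Inj_def)
      then have "last xs = n" using ys(2) lastgam by (simp add: nth_append)
      then show "xs \<in> S" using gam_in[OF app[OF ys(1)]] ys by (simp add: S_def)
    next
      fix xs assume "xs \<in> S"
      then have xs: "xs \<in> Sset n (Suc r) \<Lambda>" "last xs = n" by (auto simp: S_def)
      obtain zs where zs: "zs \<in> Inj n l" "gam zs = xs" using gam_surj[OF xs(1)] by blast
      have zl: "length zs = l" "distinct zs" "set zs \<subseteq> {1..n}" using zs by (auto simp: Inj_def)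
      have zn: "zs ! (l - 1) = n" using lastgam[of zs] zs xs by simp
      have zeq: "zs = butlast zs @ [n]"
        using zl l1 zn by (metis append_butlast_last_id last_conv_nth diff_less length_greater_0_conv less_numeral_extra(1) neq0_conv not_one_le_zero)
      have "distinct (butlast zs @ [n])" using zl zeq by metis
      then have dn: "n \<notin> set (butlast zs)" "distinct (butlast zs)" by auto
      have "set (butlast zs) \<subseteq> {1..n}" using zl in_set_butlastD by fastforce
      then have "set (butlast zs) \<subseteq> {1..n - 1}"
      proof (intro subsetI)
        fix x assume "set (butlast zs) \<subseteq> {1..n}" "x \<in> set (butlast zs)"
        then have "x \<in> {1..n}" "x \<noteq> n" using dn by auto
        then show "x \<in> {1..n - 1}" by auto
      qed
      then have "butlast zs \<in> T" using dn zl by (simp add: T_def Inj_def)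
      moreover have "\<gamma> (butlast zs) = xs" using zeq zs by (simp add: \<gamma>_def)
      ultimately show "xs \<in> \<gamma> ` T" by blast
    qed
    show "(map (inv w) ys \<in> T) = (ys \<in> T)" if "w \<in> Wgrp (n - 1)" for w ys
      unfolding T_def using Inj_clos[OF that] .
    show "\<gamma> (map (inv w) ys) = map (inv w) (\<gamma> ys)" if w: "w \<in> Wgrp (n - 1)" and ys: "ys \<in> T" for w ys
    proof -
      have "inv w permutes {1..n - 1}" using w permutes_inv by (auto simp: Wgrp_def)
      then have "inv w n = n" by (rule permutes_not_in) (use n0 in simp)
      then have "map (inv w) ys @ [n] = map (inv w) (ys @ [n])" by simp
      moreover have "length (ys @ [n]) = l" using app[OF ys] by (simp add: Inj_def)
      then have "gam (map (inv w) (ys @ [n])) = map (inv w) (gam (ys @ [n]))" by (rule gam_map)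
      ultimately show ?thesis unfolding \<gamma>_def by metis
    qed
  qed
  then show ?thesis using V H by simp
qed

theorem proposition4p10:
  fixes n r :: nat and \<Lambda> \<Lambda>' :: "nat set set"
    and k_type :: "'k::ring_1 itself"
  assumes "0 < n" and "0 < r"
    and "partition_on {1..r} \<Lambda>" and "card \<Lambda> \<le> n"
    and "partition_on {1..Suc r} \<Lambda>'" and "card \<Lambda>' \<le> n"
  shows "kW_iso (Wgrp n) (Vsub n r \<Lambda> :: (nat list \<Rightarrow> 'k) set) (Hmod n (card \<Lambda>))
       \<and> kW_iso (Wgrp (n - 1)) (Vsub' n r \<Lambda>' :: (nat list \<Rightarrow> 'k) set) (Hmod (n - 1) (card \<Lambda>' - 1))"
  using part_a[OF assms(3,4)] part_b[OF assms(1,5,6)] by blast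


end
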